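(* Let $(S,\mathfrak{n})$ be a complete Noetherian local ring with coefficient field $k$, $\Gamma$ a standard set of monomials in $k[T_1,\dots,T_r]$, and $I$ an $\mathfrak{n}$-primary ideal with a generating sequence $x_1,\dots,x_r$ which is $\Gamma$-expandable. Let $f_1,\dots,f_l\in S$ be such that their images form a $k$-basis of $S/I$, and let $\sigma:S/I\to S$ be the $k$-linear map with $\sigma(f_i+I)=f_i$. Then $\sigma$ is a lifting, and every $f\in S$ can be written uniquely as a convergent sum $f=\sum_{1\le i\le l,\,u\in\Gamma}c_{i,u}f_iu(x)$ with $c_{i,u}\in k$; the map $f\mapsto(c_{i,u})_{i,u}$ is a $k$-linear isomorphism $S\cong\prod_{1\le i\le l,\,u\in\Gamma}k$.
   Context: A standard set is a set of monomials closed under taking divisors. For $u=T_1^{a_1}\cdots T_r^{a_r}$, $u(x)=x_1^{a_1}\cdots x_r^{a_r}$. A lifting is a map $\sigma:S/I\to S$ with $\sigma(0)=0$ and $\pi\circ\sigma=\mathrm{id}_{S/I}$. $x_1,\dots,x_r$ is $\Gamma$-expandable if for every lifting $\sigma$ every $f\in S$ has a unique representation $f=\sum_{u\in\Gamma}f_uu(x)$ (convergent sum) with all $f_u\in\sigma(S/I)$. *)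

theory Defs
  imports Main
begin

text \<open>Commutative algebra on the whole of a type 'a :: comm_ring_1 (the ring S).
  Ideals are subsets of the type.\<close>

definition is_ideal :: "'a::comm_ring_1 set \<Rightarrow> bool" where
  "is_ideal J \<longleftrightarrow> 0 \<in> J \<and> (\<forall>a\<in>J. \<forall>b\<in>J. a + b \<in> J) \<and> (\<forall>a\<in>J. \<forall>s. s * a \<in> J)"

definition ideal_gen :: "'a::comm_ring_1 set \<Rightarrow> 'a set" where
  "ideal_gen A = \<Inter>{J. is_ideal J \<and> A \<subseteq> J}"

definition ideal_prod :: "'a::comm_ring_1 set \<Rightarrow> 'a set \<Rightarrow> 'a set" where
  "ideal_prod I J = ideal_gen {a * b | a b. a \<in> I \<and> b \<in> J}"

fun ideal_pow :: "'a::comm_ring_1 set \<Rightarrow> nat \<Rightarrow> 'a set" where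
  "ideal_pow I 0 = UNIV"
| "ideal_pow I (Suc m) = ideal_prod I (ideal_pow I m)"

definition noetherian :: "'a::comm_ring_1 itself \<Rightarrow> bool" where
  "noetherian _ \<longleftrightarrow> (\<forall>J::'a set. is_ideal J \<longrightarrow> (\<exists>F. finite F \<and> J = ideal_gen F))"

definition local_ring_max :: "'a::comm_ring_1 set \<Rightarrow> bool" where
  "local_ring_max n \<longleftrightarrow> is_ideal n \<and> n \<noteq> UNIV \<and> (\<forall>a. a \<notin> n \<longrightarrow> (\<exists>b. a * b = 1))"

definition adic_cauchy :: "'a::comm_ring_1 set \<Rightarrow> (nat \<Rightarrow> 'a) \<Rightarrow> bool" where
  "adic_cauchy n s \<longleftrightarrow> (\<forall>m. \<exists>N. \<forall>i\<ge>N. \<forall>j\<ge>N. s i - s j \<in> ideal_pow n m)"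

definition adic_lim :: "'a::comm_ring_1 set \<Rightarrow> (nat \<Rightarrow> 'a) \<Rightarrow> 'a \<Rightarrow> bool" where
  "adic_lim n s L \<longleftrightarrow> (\<forall>m. \<exists>N. \<forall>i\<ge>N. s i - L \<in> ideal_pow n m)"

definition adic_complete :: "'a::comm_ring_1 set \<Rightarrow> bool" where
  "adic_complete n \<longleftrightarrow> (\<Inter>m. ideal_pow n m) = {0} \<and>
     (\<forall>s. adic_cauchy n s \<longrightarrow> (\<exists>L. adic_lim n s L))"

text \<open>Coefficient field: a subfield k of S mapping bijectively onto S/n.\<close>
definition coefficient_field :: "'a::comm_ring_1 set \<Rightarrow> 'a set \<Rightarrow> bool" where
  "coefficient_field n k \<longleftrightarrow>
     0 \<in> k \<and> 1 \<in> k \<and> (\<forall>a\<in>k. \<forall>b\<in>k. a + b \<in> k \<and> a * b \<in> k) \<and> (\<forall>a\<in>k. - a \<in> k) \<and>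
     (\<forall>a\<in>k. a \<noteq> 0 \<longrightarrow> (\<exists>b\<in>k. a * b = 1)) \<and>
     (\<forall>s. \<exists>!a. a \<in> k \<and> s - a \<in> n)"

definition ideal_radical :: "'a::comm_ring_1 set \<Rightarrow> 'a set" where
  "ideal_radical I = {a. \<exists>j. a ^ j \<in> I}"

definition primary_ideal :: "'a::comm_ring_1 set \<Rightarrow> bool" where
  "primary_ideal I \<longleftrightarrow> is_ideal I \<and> I \<noteq> UNIV \<and>
     (\<forall>a b. a * b \<in> I \<longrightarrow> a \<notin> I \<longrightarrow> b \<in> ideal_radical I)"

definition n_primary :: "'a::comm_ring_1 set \<Rightarrow> 'a set \<Rightarrow> bool" where
  "n_primary n I \<longleftrightarrow> primary_ideal I \<and> ideal_radical I = n"

text \<open>Monomials in T_1..T_r are exponent vectors u :: nat => nat (T_{i+1} has exponent u i),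
  with u i = 0 for i >= r.\<close>
definition monomials :: "nat \<Rightarrow> (nat \<Rightarrow> nat) set" where
  "monomials r = {u. \<forall>i\<ge>r. u i = 0}"

definition standard_set :: "nat \<Rightarrow> (nat \<Rightarrow> nat) set \<Rightarrow> bool" where
  "standard_set r \<Gamma> \<longleftrightarrow> \<Gamma> \<subseteq> monomials r \<and> (\<forall>u\<in>\<Gamma>. \<forall>v. (\<forall>i. v i \<le> u i) \<longrightarrow> v \<in> \<Gamma>)"

definition mono_eval :: "nat \<Rightarrow> (nat \<Rightarrow> 'a::comm_ring_1) \<Rightarrow> (nat \<Rightarrow> nat) \<Rightarrow> 'a" where
  "mono_eval r x u = (\<Prod>i<r. x i ^ u i)"

definition adic_has_sum :: "'a::comm_ring_1 set \<Rightarrow> ('b \<Rightarrow> 'a) \<Rightarrow> 'b set \<Rightarrow> 'a \<Rightarrow> bool" where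
  "adic_has_sum n g A L \<longleftrightarrow>
     (\<forall>m. \<exists>F0. finite F0 \<and> F0 \<subseteq> A \<and>
        (\<forall>F. finite F \<and> F0 \<subseteq> F \<and> F \<subseteq> A \<longrightarrow> L - sum g F \<in> ideal_pow n m))"

text \<open>A lifting S/I -> S is modelled as sigma composed with the projection S -> S/I:
  a function on S that is constant on cosets of I, sends I to 0, and satisfies
  sigma a + I = a + I.  Its image is sigma(S/I).\<close>
definition is_lifting :: "'a::comm_ring_1 set \<Rightarrow> ('a \<Rightarrow> 'a) \<Rightarrow> bool" where
  "is_lifting I \<sigma> \<longleftrightarrow> (\<forall>a b. a - b \<in> I \<longrightarrow> \<sigma> a = \<sigma> b) \<and> (\<forall>a\<in>I. \<sigma> a = 0) \<and>
     (\<forall>a. \<sigma> a - a \<in> I)"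

definition expandable ::
  "'a::comm_ring_1 set \<Rightarrow> 'a set \<Rightarrow> nat \<Rightarrow> (nat \<Rightarrow> 'a) \<Rightarrow> (nat \<Rightarrow> nat) set \<Rightarrow> bool" where
  "expandable n I r x \<Gamma> \<longleftrightarrow>
     (\<forall>\<sigma>. is_lifting I \<sigma> \<longrightarrow> (\<forall>f. \<exists>!c::(nat \<Rightarrow> nat) \<Rightarrow> 'a.
        (\<forall>u\<in>\<Gamma>. c u \<in> range \<sigma>) \<and> (\<forall>u. u \<notin> \<Gamma> \<longrightarrow> c u = 0) \<and>
        adic_has_sum n (\<lambda>u. c u * mono_eval r x u) \<Gamma> f))"

definition coeff_families :: "'a set \<Rightarrow> nat \<Rightarrow> (nat \<Rightarrow> nat) set \<Rightarrow> (nat \<Rightarrow> (nat \<Rightarrow> nat) \<Rightarrow> 'a::zero) set" where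
  "coeff_families k l \<Gamma> = {c. \<forall>i u. (i < l \<and> u \<in> \<Gamma> \<longrightarrow> c i u \<in> k) \<and>
                                   (\<not> (i < l \<and> u \<in> \<Gamma>) \<longrightarrow> c i u = 0)}"

definition represents ::
  "'a::comm_ring_1 set \<Rightarrow> nat \<Rightarrow> (nat \<Rightarrow> 'a) \<Rightarrow> nat \<Rightarrow> (nat \<Rightarrow> 'a) \<Rightarrow> (nat \<Rightarrow> nat) set
     \<Rightarrow> (nat \<Rightarrow> (nat \<Rightarrow> nat) \<Rightarrow> 'a) \<Rightarrow> 'a \<Rightarrow> bool" where
  "represents n r x l f \<Gamma> c s \<longleftrightarrow>
     adic_has_sum n (\<lambda>(i, u). c i u * f i * mono_eval r x u) ({..<l} \<times> \<Gamma>) s"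

end

theory Submission
  imports Defs
begin

lemma ideal_gen_ideal: "is_ideal (ideal_gen A)"
  unfolding is_ideal_def ideal_gen_def by auto

lemma ideal_gen_sub: "A \<subseteq> ideal_gen A"
  unfolding ideal_gen_def by auto

lemma ideal_gen_least: "is_ideal J \<Longrightarrow> A \<subseteq> J \<Longrightarrow> ideal_gen A \<subseteq> J"
  unfolding ideal_gen_def by auto

lemma ideal_UNIV: "is_ideal UNIV"
  unfolding is_ideal_def by auto

lemma ideal_pow_ideal: "is_ideal (ideal_pow n m)"
  by (cases m) (auto simp: ideal_UNIV ideal_prod_def ideal_gen_ideal)

lemma ideal_0: "is_ideal J \<Longrightarrow> 0 \<in> J"
  unfolding is_ideal_def by auto

lemma ideal_add: "is_ideal J \<Longrightarrow> a \<in> J \<Longrightarrow> b \<in> J \<Longrightarrow> a + b \<in> J"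
  unfolding is_ideal_def by auto

lemma ideal_multL: "is_ideal J \<Longrightarrow> a \<in> J \<Longrightarrow> s * a \<in> J"
  unfolding is_ideal_def by auto

lemma ideal_multR: "is_ideal J \<Longrightarrow> a \<in> J \<Longrightarrow> a * s \<in> J"
  using ideal_multL[of J a s] by (simp add: mult.commute)

lemma ideal_neg: "is_ideal J \<Longrightarrow> a \<in> J \<Longrightarrow> - a \<in> J"
  using ideal_multL[of J a "-1"] by simp

lemma ideal_diff: "is_ideal J \<Longrightarrow> a \<in> J \<Longrightarrow> b \<in> J \<Longrightarrow> a - b \<in> J"
  using ideal_add[of J a "-b"] ideal_neg[of J b] by simp

lemma ideal_sum: "is_ideal J \<Longrightarrow> (\<And>a. a \<in> F \<Longrightarrow> g a \<in> J) \<Longrightarrow> sum g F \<in> J"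
proof (induction F rule: infinite_finite_induct)
  case (infinite A) then show ?case by (simp add: ideal_0)
next
  case empty then show ?case by (simp add: ideal_0)
next
  case (insert a F) then show ?case by (simp add: ideal_add)
qed

lemma ideal_pow_Suc_sub: "is_ideal n \<Longrightarrow> ideal_pow n (Suc m) \<subseteq> ideal_pow n m"
  apply (simp add: ideal_prod_def)
  apply (rule ideal_gen_least[OF ideal_pow_ideal])
  using ideal_multL[OF ideal_pow_ideal] by auto

lemma ideal_pow_anti: assumes "is_ideal n" "m \<le> m'" shows "ideal_pow n m' \<subseteq> ideal_pow n m"
  using assms(2)
proof (induction m' rule: dec_induct)
  case base then show ?case by simp
next
  case (step q) then show ?case using ideal_pow_Suc_sub[OF assms(1), of q] by blast
qed

lemma power_in_pow: "is_ideal n \<Longrightarrow> a \<in> n \<Longrightarrow> a ^ j \<in> ideal_pow n j"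
proof (induction j)
  case 0 then show ?case by simp
next
  case (Suc j)
  then have "a * a ^ j \<in> {a * b |a b. a \<in> n \<and> b \<in> ideal_pow n j}" by blast
  then have "a * a ^ j \<in> ideal_gen {a * b |a b. a \<in> n \<and> b \<in> ideal_pow n j}"
    by (rule subsetD[OF ideal_gen_sub])
  then show ?case by (simp add: ideal_prod_def)
qed

lemma mono_eval_in:
  assumes "is_ideal n" "\<forall>j<r. x j \<in> n" "j < r" "u j \<ge> m"
  shows "mono_eval r x u \<in> ideal_pow n m"
proof -
  have "mono_eval r x u = x j ^ u j * (\<Prod>i\<in>{..<r} - {j}. x i ^ u i)"
    unfolding mono_eval_def using assms(3) by (simp add: prod.remove)
  moreover have "x j ^ u j \<in> ideal_pow n m"
    using power_in_pow[OF assms(1), of "x j" "u j"] assms ideal_pow_anti[OF assms(1) assms(4)] by auto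
  ultimately show ?thesis using ideal_multR[OF ideal_pow_ideal] by simp
qed

lemma finite_box: "finite {u \<in> monomials r. \<forall>j<r. u j < N}"
proof -
  let ?S = "{u \<in> monomials r. \<forall>j<r. u j < N}"
  have "inj_on (\<lambda>u. map u [0..<r]) ?S"
  proof (rule inj_onI)
    fix u v assume u: "u \<in> ?S" and v: "v \<in> ?S" and e: "map u [0..<r] = map v [0..<r]"
    show "u = v"
    proof
      fix j show "u j = v j"
      proof (cases "j < r")
        case True then show ?thesis using e by (metis map_eq_conv atLeastLessThan_iff set_upt zero_le)
      next
        case False then show ?thesis using u v by (auto simp: monomials_def)
      qed
    qed
  qed
  moreover have "(\<lambda>u. map u [0..<r]) ` ?S \<subseteq> {xs. set xs \<subseteq> {..<N} \<and> length xs = r}"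
    by auto
  moreover have "finite {xs. set xs \<subseteq> {..<N} \<and> length xs = r}"
    by (rule finite_lists_length_eq) simp
  ultimately show ?thesis by (meson finite_imageD finite_subset)
qed

lemma has_sum_unique:
  assumes sep: "(\<Inter>m. ideal_pow n m) = {0}" and nI: "is_ideal n"
    and a: "adic_has_sum n g A L" and b: "adic_has_sum n g A L'"
  shows "L = L'"
proof -
  have "L - L' \<in> ideal_pow n m" for m
  proof -
    obtain F1 where F1: "finite F1" "F1 \<subseteq> A" "\<forall>F. finite F \<and> F1 \<subseteq> F \<and> F \<subseteq> A \<longrightarrow> L - sum g F \<in> ideal_pow n m"
      using a[unfolded adic_has_sum_def, THEN spec, of m] by blast
    obtain F2 where F2: "finite F2" "F2 \<subseteq> A" "\<forall>F. finite F \<and> F2 \<subseteq> F \<and> F \<subseteq> A \<longrightarrow> L' - sum g F \<in> ideal_pow n m"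
      using b[unfolded adic_has_sum_def, THEN spec, of m] by blast
    have "L - sum g (F1 \<union> F2) \<in> ideal_pow n m" "L' - sum g (F1 \<union> F2) \<in> ideal_pow n m"
      by (intro F1(3)[rule_format] F2(3)[rule_format]; use F1 F2 in auto)+
    from ideal_diff[OF ideal_pow_ideal this] show ?thesis by simp
  qed
  then have "L - L' \<in> (\<Inter>m. ideal_pow n m)" by blast
  then show ?thesis using sep by simp
qed

lemma has_sum_cong:
  assumes "\<And>a. a \<in> A \<Longrightarrow> g a = h a" "adic_has_sum n g A L"
  shows "adic_has_sum n h A L"
proof -
  have "sum g F = sum h F" if "F \<subseteq> A" for F
    using assms(1) that by (intro sum.cong) auto
  then show ?thesis using assms(2) unfolding adic_has_sum_def by metis
qed

lemma has_sum_add: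
  assumes "adic_has_sum n g A L" "adic_has_sum n h A L'"
  shows "adic_has_sum n (\<lambda>a. g a + h a) A (L + L')"
  unfolding adic_has_sum_def
proof
  fix m
  obtain F1 where F1: "finite F1" "F1 \<subseteq> A" "\<forall>F. finite F \<and> F1 \<subseteq> F \<and> F \<subseteq> A \<longrightarrow> L - sum g F \<in> ideal_pow n m"
    using assms(1)[unfolded adic_has_sum_def, THEN spec, of m] by blast
  obtain F2 where F2: "finite F2" "F2 \<subseteq> A" "\<forall>F. finite F \<and> F2 \<subseteq> F \<and> F \<subseteq> A \<longrightarrow> L' - sum h F \<in> ideal_pow n m"
    using assms(2)[unfolded adic_has_sum_def, THEN spec, of m] by blast
  show "\<exists>F0. finite F0 \<and> F0 \<subseteq> A \<and> (\<forall>F. finite F \<and> F0 \<subseteq> F \<and> F \<subseteq> A \<longrightarrow> L + L' - (\<Sum>a\<in>F. g a + h a) \<in> ideal_pow n m)"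
  proof (intro exI[of _ "F1 \<union> F2"] conjI allI impI)
    fix F assume F: "finite F \<and> F1 \<union> F2 \<subseteq> F \<and> F \<subseteq> A"
    have "L - sum g F \<in> ideal_pow n m" by (intro F1(3)[rule_format]) (use F in auto)
    moreover have "L' - sum h F \<in> ideal_pow n m" by (intro F2(3)[rule_format]) (use F in auto)
    ultimately have "(L - sum g F) + (L' - sum h F) \<in> ideal_pow n m"
      using ideal_add[OF ideal_pow_ideal] by blast
    then show "L + L' - (\<Sum>a\<in>F. g a + h a) \<in> ideal_pow n m"
      by (simp add: sum.distrib algebra_simps)
  qed (use F1 F2 in auto)
qed

lemma has_sum_scale:
  assumes "adic_has_sum n g A L"
  shows "adic_has_sum n (\<lambda>a. c * g a) A (c * L)"
  unfolding adic_has_sum_def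
proof
  fix m
  obtain F1 where F1: "finite F1" "F1 \<subseteq> A" "\<forall>F. finite F \<and> F1 \<subseteq> F \<and> F \<subseteq> A \<longrightarrow> L - sum g F \<in> ideal_pow n m"
    using assms(1)[unfolded adic_has_sum_def, THEN spec, of m] by blast
  show "\<exists>F0. finite F0 \<and> F0 \<subseteq> A \<and> (\<forall>F. finite F \<and> F0 \<subseteq> F \<and> F \<subseteq> A \<longrightarrow> c * L - (\<Sum>a\<in>F. c * g a) \<in> ideal_pow n m)"
  proof (intro exI[of _ F1] conjI allI impI)
    fix F assume F: "finite F \<and> F1 \<subseteq> F \<and> F \<subseteq> A"
    have "L - sum g F \<in> ideal_pow n m" by (intro F1(3)[rule_format]) (use F in auto)
    then have "c * (L - sum g F) \<in> ideal_pow n m"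
      using ideal_multL[OF ideal_pow_ideal] by blast
    then show "c * L - (\<Sum>a\<in>F. c * g a) \<in> ideal_pow n m"
      by (simp add: sum_distrib_left algebra_simps)
  qed (use F1 in auto)
qed

lemma has_sum_double:
  fixes l :: nat
  assumes "adic_has_sum n (\<lambda>(i, u). t i u) ({..<l} \<times> G) L"
  shows "adic_has_sum n (\<lambda>u. \<Sum>i<l. t i u) G L"
  unfolding adic_has_sum_def
proof
  fix m
  obtain F1 where F1: "finite F1" "F1 \<subseteq> {..<l} \<times> G"
    "\<forall>F. finite F \<and> F1 \<subseteq> F \<and> F \<subseteq> {..<l} \<times> G \<longrightarrow> L - sum (\<lambda>(i, u). t i u) F \<in> ideal_pow n m"
    using assms(1)[unfolded adic_has_sum_def, THEN spec, of m] by blast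
  show "\<exists>F0. finite F0 \<and> F0 \<subseteq> G \<and> (\<forall>F. finite F \<and> F0 \<subseteq> F \<and> F \<subseteq> G \<longrightarrow> L - (\<Sum>u\<in>F. \<Sum>i<l. t i u) \<in> ideal_pow n m)"
  proof (intro exI[of _ "snd ` F1"] conjI allI impI)
    fix F assume F: "finite F \<and> snd ` F1 \<subseteq> F \<and> F \<subseteq> G"
    have "F1 \<subseteq> {..<l} \<times> F" using F F1(2) by force
    moreover have "finite ({..<l} \<times> F)" using F by (intro finite_cartesian_product) auto
    ultimately have "L - sum (\<lambda>(i, u). t i u) ({..<l} \<times> F) \<in> ideal_pow n m"
      by (intro F1(3)[rule_format]) (use F in auto)
    moreover have "sum (\<lambda>(i, u). t i u) ({..<l} \<times> F) = (\<Sum>u\<in>F. \<Sum>i<l. t i u)"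
      using F by (simp add: sum.cartesian_product[symmetric] sum.swap[of _ "{..<l}"])
    ultimately show "L - (\<Sum>u\<in>F. \<Sum>i<l. t i u) \<in> ideal_pow n m" by simp
  qed (use F1 in auto)
qed

lemma finite_cover:
  fixes B :: "nat \<Rightarrow> 'b set"
  assumes "finite F" "F \<subseteq> A" "\<forall>a\<in>A. \<exists>N. a \<in> B N" "\<forall>N N'. N \<le> N' \<longrightarrow> B N \<subseteq> B N'"
  shows "\<exists>M. F \<subseteq> B M"
  using assms(1,2)
proof (induction F rule: finite_induct)
  case empty then show ?case by simp
next
  case (insert a F)
  then obtain M where M: "F \<subseteq> B M" by auto
  obtain N where N: "a \<in> B N" using insert assms(3) by auto
  have "insert a F \<subseteq> B (max M N)"
  proof -
    have "B M \<subseteq> B (max M N)" "B N \<subseteq> B (max M N)" using assms(4)[rule_format, of M "max M N"] assms(4)[rule_format, of N "max M N"] by auto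
    then show ?thesis using M N by blast
  qed
  then show ?case by blast
qed

lemma has_sum_exists:
  assumes nI: "is_ideal n" and comp: "\<forall>s. adic_cauchy n s \<longrightarrow> (\<exists>L. adic_lim n s L)"
    and Bsub: "\<forall>N. B N \<subseteq> A" and Bfin: "\<forall>N. finite (B N)"
    and Bmono: "\<forall>N N'. N \<le> N' \<longrightarrow> B N \<subseteq> B N'"
    and cover: "\<forall>a\<in>A. \<exists>N. a \<in> B N"
    and tail: "\<forall>N. \<forall>a \<in> A - B N. g a \<in> ideal_pow n N"
  shows "\<exists>L. adic_has_sum n g A L"
proof -
  define S where "S N = sum g (B N)" for N
  have ts: "S M - S N \<in> ideal_pow n N" if "N \<le> M" for N M
  proof -
    have "S M = sum g (B M - B N) + S N"
      unfolding S_def using Bmono Bfin that by (simp add: sum.subset_diff)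
    moreover have "sum g (B M - B N) \<in> ideal_pow n N"
      using tail Bsub by (intro ideal_sum[OF ideal_pow_ideal]) auto
    ultimately show ?thesis by simp
  qed
  have "adic_cauchy n S"
    unfolding adic_cauchy_def
  proof
    fix m
    show "\<exists>N. \<forall>i\<ge>N. \<forall>j\<ge>N. S i - S j \<in> ideal_pow n m"
    proof (intro exI allI impI)
      fix i j assume "m \<le> i" "m \<le> j"
      have "(S i - S m) - (S j - S m) \<in> ideal_pow n m"
        by (rule ideal_diff[OF ideal_pow_ideal]; use ts \<open>m \<le> i\<close> \<open>m \<le> j\<close> in auto)
      then show "S i - S j \<in> ideal_pow n m" by simp
    qed
  qed
  then obtain L where L: "adic_lim n S L" using comp by blast
  have "adic_has_sum n g A L"
    unfolding adic_has_sum_def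
  proof
    fix m
    obtain N1 where N1: "\<forall>i\<ge>N1. S i - L \<in> ideal_pow n m"
      using L[unfolded adic_lim_def, THEN spec, of m] by blast
    define N where "N = max N1 m"
    show "\<exists>F0. finite F0 \<and> F0 \<subseteq> A \<and> (\<forall>F. finite F \<and> F0 \<subseteq> F \<and> F \<subseteq> A \<longrightarrow> L - sum g F \<in> ideal_pow n m)"
    proof (intro exI[of _ "B N"] conjI allI impI)
      fix F assume F: "finite F \<and> B N \<subseteq> F \<and> F \<subseteq> A"
      obtain M0 where M0: "F \<subseteq> B M0" using finite_cover[of F A B] F cover Bmono by blast
      define M where "M = max M0 N"
      have FM: "F \<subseteq> B M" using M0 Bmono unfolding M_def by (meson max.cobounded1 order_trans)
      have "S M = sum g (B M - F) + sum g F"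
        unfolding S_def using FM Bfin by (simp add: sum.subset_diff)
      then have eq: "L - sum g F = sum g (B M - F) - (S M - L)" by (simp add: algebra_simps)
      have "S M - L \<in> ideal_pow n m" using N1 unfolding M_def N_def by auto
      moreover have "sum g (B M - F) \<in> ideal_pow n m"
      proof (rule ideal_sum[OF ideal_pow_ideal])
        fix a assume "a \<in> B M - F"
        then have "a \<in> A - B N" using F Bsub by blast
        then have "g a \<in> ideal_pow n N" using tail by blast
        then show "g a \<in> ideal_pow n m" using ideal_pow_anti[OF nI, of m N] unfolding N_def by auto
      qed
      ultimately show "L - sum g F \<in> ideal_pow n m"
        unfolding eq using ideal_diff[OF ideal_pow_ideal] by blast
    qed (use Bsub Bfin in auto)
  qed
  then show ?thesis by blast
qed

theorem lemma4p1:
  fixes n I k :: "'a::comm_ring_1 set"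
    and \<Gamma> :: "(nat \<Rightarrow> nat) set"
    and r l :: nat
    and x f :: "nat \<Rightarrow> 'a"
    and \<sigma> :: "'a \<Rightarrow> 'a"
  assumes noeth: "noetherian TYPE('a)"
    and local: "local_ring_max n"
    and complete: "adic_complete n"
    and coeff: "coefficient_field n k"
    and std: "standard_set r \<Gamma>"
    and primary: "n_primary n I"
    and gens: "I = ideal_gen (x ` {..<r})"
    and expand: "expandable n I r x \<Gamma>"
    and span: "\<forall>s. \<exists>a. (\<forall>i<l. a i \<in> k) \<and> s - (\<Sum>i<l. a i * f i) \<in> I"
    and indep: "\<forall>a. (\<forall>i<l. a i \<in> k) \<longrightarrow> (\<Sum>i<l. a i * f i) \<in> I \<longrightarrow> (\<forall>i<l. a i = 0)"
    and \<sigma>_well: "\<forall>a b. a - b \<in> I \<longrightarrow> \<sigma> a = \<sigma> b"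
    and \<sigma>_add: "\<forall>a b. \<sigma> (a + b) = \<sigma> a + \<sigma> b"
    and \<sigma>_smult: "\<forall>c\<in>k. \<forall>a. \<sigma> (c * a) = c * \<sigma> a"
    and \<sigma>_basis: "\<forall>i<l. \<sigma> (f i) = f i"
  shows "is_lifting I \<sigma> \<and>
    (\<forall>s. \<exists>!c. c \<in> coeff_families k l \<Gamma> \<and> represents n r x l f \<Gamma> c s) \<and>
    (let \<Phi> = (\<lambda>s. THE c. c \<in> coeff_families k l \<Gamma> \<and> represents n r x l f \<Gamma> c s) in
       bij_betw \<Phi> UNIV (coeff_families k l \<Gamma>) \<and>
       (\<forall>s t. \<Phi> (s + t) = (\<lambda>i u. \<Phi> s i u + \<Phi> t i u)) \<and>
       (\<forall>a\<in>k. \<forall>s. \<Phi> (a * s) = (\<lambda>i u. a * \<Phi> s i u)))"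
proof -
  have nI: "is_ideal n" using local unfolding local_ring_max_def by blast
  have sep: "(\<Inter>m. ideal_pow n m) = {0}" and comp: "\<forall>s. adic_cauchy n s \<longrightarrow> (\<exists>L. adic_lim n s L)"
    using complete unfolding adic_complete_def by blast+
  have Iid: "is_ideal I" using gens ideal_gen_ideal by simp
  have IN: "I \<subseteq> n"
  proof
    fix a assume "a \<in> I"
    then have "a \<in> ideal_radical I" unfolding ideal_radical_def by (intro CollectI exI[of _ 1]) simp
    then show "a \<in> n" using primary unfolding n_primary_def by simp
  qed
  have xn: "\<forall>j<r. x j \<in> n" using gens ideal_gen_sub[of "x ` {..<r}"] IN by auto
  have \<Gamma>m: "\<Gamma> \<subseteq> monomials r" using std unfolding standard_set_def by blast
  have k0: "0 \<in> k" and kadd: "\<And>a b. a \<in> k \<Longrightarrow> b \<in> k \<Longrightarrow> a + b \<in> k"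
    and kmul: "\<And>a b. a \<in> k \<Longrightarrow> b \<in> k \<Longrightarrow> a * b \<in> k" and kneg: "\<And>a. a \<in> k \<Longrightarrow> - a \<in> k"
    using coeff unfolding coefficient_field_def by blast+
  have \<sigma>0: "\<sigma> 0 = 0"
  proof -
    have "\<sigma> (0 + 0) = \<sigma> 0 + \<sigma> 0" using \<sigma>_add by blast
    then show ?thesis by simp
  qed
  have \<sigma>sum: "\<sigma> (sum g F) = (\<Sum>i\<in>F. \<sigma> (g i))" for g :: "nat \<Rightarrow> 'a" and F
  proof (induction F rule: infinite_finite_induct)
    case (infinite A) then show ?case by (simp add: \<sigma>0)
  next
    case empty then show ?case by (simp add: \<sigma>0)
  next
    case (insert a F) then show ?case by (simp add: \<sigma>_add)
  qed
  have \<sigma>lin: "\<sigma> (\<Sum>i<l. a i * f i) = (\<Sum>i<l. a i * f i)" if "\<forall>i<l. a i \<in> k" for a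
    unfolding \<sigma>sum using that \<sigma>_smult \<sigma>_basis by (intro sum.cong) auto
  have \<sigma>rep: "\<exists>a. (\<forall>i<l. a i \<in> k) \<and> \<sigma> s = (\<Sum>i<l. a i * f i) \<and> s - (\<Sum>i<l. a i * f i) \<in> I" for s
  proof -
    obtain a where a: "\<forall>i<l. a i \<in> k" "s - (\<Sum>i<l. a i * f i) \<in> I" using span by blast
    then have "\<sigma> s = \<sigma> (\<Sum>i<l. a i * f i)" using \<sigma>_well by blast
    then show ?thesis using a \<sigma>lin[OF a(1)] by auto
  qed
  have lift: "is_lifting I \<sigma>"
    unfolding is_lifting_def
  proof (intro conjI)
    show "\<forall>a b. a - b \<in> I \<longrightarrow> \<sigma> a = \<sigma> b" by (rule \<sigma>_well)
  next
    show "\<forall>a\<in>I. \<sigma> a = 0"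
    proof
    fix a assume "a \<in> I"
    then have "\<sigma> a = \<sigma> 0" using \<sigma>_well by force
    then show "\<sigma> a = 0" using \<sigma>0 by simp
    qed
  next
    show "\<forall>a. \<sigma> a - a \<in> I"
    proof
    fix a
    obtain b where b: "\<sigma> a = (\<Sum>i<l. b i * f i)" "a - (\<Sum>i<l. b i * f i) \<in> I" using \<sigma>rep by blast
    have "- (a - (\<Sum>i<l. b i * f i)) \<in> I" using ideal_neg[OF Iid b(2)] .
    then show "\<sigma> a - a \<in> I" using b(1) by simp
    qed
  qed
  have range\<sigma>: "y \<in> range \<sigma> \<longleftrightarrow> (\<exists>a. (\<forall>i<l. a i \<in> k) \<and> y = (\<Sum>i<l. a i * f i))" for y
  proof
    assume "y \<in> range \<sigma>"
    then obtain s where "y = \<sigma> s" by blast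
    then show "\<exists>a. (\<forall>i<l. a i \<in> k) \<and> y = (\<Sum>i<l. a i * f i)" using \<sigma>rep by blast
  next
    assume "\<exists>a. (\<forall>i<l. a i \<in> k) \<and> y = (\<Sum>i<l. a i * f i)"
    then obtain a where "\<forall>i<l. a i \<in> k" "y = (\<Sum>i<l. a i * f i)" by blast
    then have "y = \<sigma> y" using \<sigma>lin by simp
    then show "y \<in> range \<sigma>" by (metis rangeI)
  qed
  have ucoef: "a i = b i" if "\<forall>i<l. a i \<in> k" "\<forall>i<l. b i \<in> k"
    "(\<Sum>i<l. a i * f i) = (\<Sum>i<l. b i * f i)" "i < l" for a b i
  proof -
    have "\<forall>i<l. a i - b i \<in> k"
    proof (intro allI impI)
      fix i assume "i < l"
      then have "a i + - b i \<in> k" using that kadd kneg by blast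
      then show "a i - b i \<in> k" by simp
    qed
    moreover have "(\<Sum>i<l. (a i - b i) * f i) = 0"
      using that(3) by (simp add: left_diff_distrib sum_subtractf)
    then have "(\<Sum>i<l. (a i - b i) * f i) \<in> I" using ideal_0[OF Iid] by simp
    ultimately have "a i - b i = 0" using indep[rule_format, of "\<lambda>i. a i - b i"] that(4) by blast
    then show ?thesis by simp
  qed
  define D where "D c = (\<lambda>u. \<Sum>i<l. c i u * f i)" for c :: "nat \<Rightarrow> (nat \<Rightarrow> nat) \<Rightarrow> 'a"
  define CF where "CF = coeff_families k l \<Gamma>"
  have DE: "(\<forall>u\<in>\<Gamma>. D c u \<in> range \<sigma>) \<and> (\<forall>u. u \<notin> \<Gamma> \<longrightarrow> D c u = 0)" if "c \<in> CF" for c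
  proof (intro conjI ballI allI impI)
    fix u assume "u \<in> \<Gamma>"
    then have "\<forall>i<l. c i u \<in> k" using that unfolding CF_def coeff_families_def by blast
    then show "D c u \<in> range \<sigma>" unfolding range\<sigma> D_def by (intro exI[of _ "\<lambda>i. c i u"]) simp
  next
    fix u assume "u \<notin> \<Gamma>"
    then have "\<forall>i. c i u = 0" using that unfolding CF_def coeff_families_def by blast
    then show "D c u = 0" unfolding D_def by simp
  qed
  have Dinj: "c = c'" if "c \<in> CF" "c' \<in> CF" "D c = D c'" for c c'
  proof (intro ext)
    fix i u
    show "c i u = c' i u"
    proof (cases "i < l \<and> u \<in> \<Gamma>")
      case True
      have "D c u = D c' u" using that(3) by simp
      then show ?thesis using True that(1,2) unfolding CF_def coeff_families_def D_def
        by (intro ucoef[of "\<lambda>i. c i u" "\<lambda>i. c' i u"]) auto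
    next
      case False
      then show ?thesis using that(1,2) unfolding CF_def coeff_families_def by auto
    qed
  qed
  have Dsurj: "\<exists>c\<in>CF. D c = d" if "\<forall>u\<in>\<Gamma>. d u \<in> range \<sigma>" "\<forall>u. u \<notin> \<Gamma> \<longrightarrow> d u = 0" for d
  proof -
    have "\<forall>u\<in>\<Gamma>. \<exists>a. (\<forall>i<l. a i \<in> k) \<and> d u = (\<Sum>i<l. a i * f i)" using that(1) by (simp only: range\<sigma>)
    from bchoice[OF this] obtain A where A: "\<forall>u\<in>\<Gamma>. (\<forall>i<l. A u i \<in> k) \<and> d u = (\<Sum>i<l. A u i * f i)" by blast
    define c where "c i u = (if i < l \<and> u \<in> \<Gamma> then A u i else 0)" for i u
    have "c \<in> CF" unfolding CF_def coeff_families_def c_def using A by auto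
    moreover have "D c = d"
    proof
      fix u show "D c u = d u"
      proof (cases "u \<in> \<Gamma>")
        case True
        then show ?thesis using A unfolding D_def c_def by simp
      next
        case False
        then show ?thesis using that(2) unfolding D_def c_def by simp
      qed
    qed
    ultimately show ?thesis by blast
  qed
  have rep_single: "adic_has_sum n (\<lambda>u. D c u * mono_eval r x u) \<Gamma> s"
    if "represents n r x l f \<Gamma> c s" for c s
  proof -
    have "adic_has_sum n (\<lambda>u. \<Sum>i<l. c i u * f i * mono_eval r x u) \<Gamma> s"
      using has_sum_double[of n "\<lambda>i u. c i u * f i * mono_eval r x u" l \<Gamma> s] that
      unfolding represents_def by simp
    then show ?thesis unfolding D_def by (simp add: sum_distrib_right)
  qed
  have rep_ex: "\<exists>L. represents n r x l f \<Gamma> c L" if "c \<in> CF" for c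
  proof -
    define B where "B N = {..<l} \<times> {u \<in> \<Gamma>. \<forall>j<r. u j < N}" for N
    have "\<exists>L. adic_has_sum n (\<lambda>(i, u). c i u * f i * mono_eval r x u) ({..<l} \<times> \<Gamma>) L"
    proof (rule has_sum_exists[OF nI comp, of B])
      show "\<forall>N. B N \<subseteq> {..<l} \<times> \<Gamma>" unfolding B_def by auto
      show "\<forall>N. finite (B N)"
      proof
        fix N
        have "{u \<in> \<Gamma>. \<forall>j<r. u j < N} \<subseteq> {u \<in> monomials r. \<forall>j<r. u j < N}" using \<Gamma>m by auto
        then have "finite {u \<in> \<Gamma>. \<forall>j<r. u j < N}" using finite_box finite_subset by blast
        then show "finite (B N)" unfolding B_def by simp
      qed
      show "\<forall>N N'. N \<le> N' \<longrightarrow> B N \<subseteq> B N'" unfolding B_def by fastforce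
      show "\<forall>a\<in>{..<l} \<times> \<Gamma>. \<exists>N. a \<in> B N"
      proof
        fix a assume a: "a \<in> {..<l} \<times> \<Gamma>"
        obtain i u where iu: "a = (i, u)" by fastforce
        have "\<forall>j<r. u j < Suc (\<Sum>j<r. u j)"
          using member_le_sum[of _ "{..<r}" u] by (simp add: le_imp_less_Suc)
        then have "a \<in> B (Suc (\<Sum>j<r. u j))" using a iu unfolding B_def by auto
        then show "\<exists>N. a \<in> B N" by blast
      qed
      show "\<forall>N. \<forall>a\<in>{..<l} \<times> \<Gamma> - B N. (case a of (i, u) \<Rightarrow> c i u * f i * mono_eval r x u) \<in> ideal_pow n N"
      proof (intro allI ballI)
        fix N a assume a: "a \<in> {..<l} \<times> \<Gamma> - B N"
        obtain i u where iu: "a = (i, u)" by fastforce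
        then obtain j where "j < r" "N \<le> u j" using a unfolding B_def by auto
        then have "mono_eval r x u \<in> ideal_pow n N" using mono_eval_in[OF nI xn] by blast
        then show "(case a of (i, u) \<Rightarrow> c i u * f i * mono_eval r x u) \<in> ideal_pow n N"
          using iu ideal_multL[OF ideal_pow_ideal] by simp
      qed
    qed
    then show ?thesis unfolding represents_def by blast
  qed
  have ex1: "\<forall>s. \<exists>!c. c \<in> coeff_families k l \<Gamma> \<and> represents n r x l f \<Gamma> c s"
  proof
    fix s
    have "\<exists>!d::(nat \<Rightarrow> nat) \<Rightarrow> 'a. (\<forall>u\<in>\<Gamma>. d u \<in> range \<sigma>) \<and> (\<forall>u. u \<notin> \<Gamma> \<longrightarrow> d u = 0) \<and>
        adic_has_sum n (\<lambda>u. d u * mono_eval r x u) \<Gamma> s"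
      using expand[unfolded expandable_def, rule_format, OF lift, of s] .
    then obtain d where d: "\<forall>u\<in>\<Gamma>. d u \<in> range \<sigma>" "\<forall>u. u \<notin> \<Gamma> \<longrightarrow> d u = 0"
        "adic_has_sum n (\<lambda>u. d u * mono_eval r x u) \<Gamma> s"
      and duniq: "\<And>d'. (\<forall>u\<in>\<Gamma>. d' u \<in> range \<sigma>) \<and> (\<forall>u. u \<notin> \<Gamma> \<longrightarrow> d' u = 0) \<and>
        adic_has_sum n (\<lambda>u. d' u * mono_eval r x u) \<Gamma> s \<Longrightarrow> d' = d"
      by (elim ex1E) blast
    obtain c where c: "c \<in> CF" "D c = d" using Dsurj[OF d(1,2)] by blast
    obtain L where L: "represents n r x l f \<Gamma> c L" using rep_ex[OF c(1)] by blast
    have "adic_has_sum n (\<lambda>u. d u * mono_eval r x u) \<Gamma> L" using rep_single[OF L] c(2) by simp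
    then have "L = s" using has_sum_unique[OF sep nI _ d(3)] by blast
    show "\<exists>!c. c \<in> coeff_families k l \<Gamma> \<and> represents n r x l f \<Gamma> c s"
    proof (rule ex1I[of _ c])
      show "c \<in> coeff_families k l \<Gamma> \<and> represents n r x l f \<Gamma> c s"
        using c(1) L \<open>L = s\<close> unfolding CF_def by simp
    next
      fix c' assume c': "c' \<in> coeff_families k l \<Gamma> \<and> represents n r x l f \<Gamma> c' s"
      then have c'CF: "c' \<in> CF" and c'r: "represents n r x l f \<Gamma> c' s" unfolding CF_def by blast+
      have "D c' = d" by (rule duniq) (use DE[OF c'CF] rep_single[OF c'r] in blast)
      then show "c' = c" using Dinj[of c' c] c c' unfolding CF_def by simp
    qed
  qed
  define \<Phi> where "\<Phi> = (\<lambda>s. THE c. c \<in> coeff_families k l \<Gamma> \<and> represents n r x l f \<Gamma> c s)"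
  have \<Phi>P: "\<Phi> s \<in> CF \<and> represents n r x l f \<Gamma> (\<Phi> s) s" for s
    unfolding \<Phi>_def CF_def using theI'[OF ex1[rule_format, of s]] by simp
  have \<Phi>eq: "\<Phi> s = c" if "c \<in> CF" "represents n r x l f \<Gamma> c s" for s c
    unfolding \<Phi>_def using the1_equality[OF ex1[rule_format, of s]] that unfolding CF_def by blast
  have bij: "bij_betw \<Phi> UNIV CF"
    unfolding bij_betw_def
  proof
    show "inj_on \<Phi> UNIV"
    proof (rule inj_onI)
      fix s t assume "\<Phi> s = \<Phi> t"
      then have "represents n r x l f \<Gamma> (\<Phi> s) t" using \<Phi>P[of t] by simp
      moreover have "represents n r x l f \<Gamma> (\<Phi> s) s" using \<Phi>P[of s] by simp
      ultimately show "s = t" unfolding represents_def by (rule has_sum_unique[OF sep nI, rotated])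
    qed
    show "range \<Phi> = CF"
    proof
      show "range \<Phi> \<subseteq> CF" using \<Phi>P by blast
      show "CF \<subseteq> range \<Phi>"
      proof
        fix c assume "c \<in> CF"
        then obtain L where "represents n r x l f \<Gamma> c L" using rep_ex by blast
        then have "\<Phi> L = c" using \<Phi>eq \<open>c \<in> CF\<close> by blast
        then show "c \<in> range \<Phi>" by (metis rangeI)
      qed
    qed
  qed
  have add: "\<Phi> (s + t) = (\<lambda>i u. \<Phi> s i u + \<Phi> t i u)" for s t
  proof (rule \<Phi>eq)
    show "(\<lambda>i u. \<Phi> s i u + \<Phi> t i u) \<in> CF"
      using \<Phi>P[of s] \<Phi>P[of t] kadd unfolding CF_def coeff_families_def by auto
    have "adic_has_sum n (\<lambda>a. (case a of (i, u) \<Rightarrow> \<Phi> s i u * f i * mono_eval r x u) +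
        (case a of (i, u) \<Rightarrow> \<Phi> t i u * f i * mono_eval r x u)) ({..<l} \<times> \<Gamma>) (s + t)"
      using has_sum_add \<Phi>P[of s] \<Phi>P[of t] unfolding represents_def by blast
    then show "represents n r x l f \<Gamma> (\<lambda>i u. \<Phi> s i u + \<Phi> t i u) (s + t)"
      unfolding represents_def by (rule has_sum_cong[rotated]) (auto simp: algebra_simps)
  qed
  have smul: "\<Phi> (a * s) = (\<lambda>i u. a * \<Phi> s i u)" if "a \<in> k" for a s
  proof (rule \<Phi>eq)
    show "(\<lambda>i u. a * \<Phi> s i u) \<in> CF"
      using \<Phi>P[of s] kmul that unfolding CF_def coeff_families_def by auto
    have "adic_has_sum n (\<lambda>b. a * (case b of (i, u) \<Rightarrow> \<Phi> s i u * f i * mono_eval r x u)) ({..<l} \<times> \<Gamma>) (a * s)"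
      using has_sum_scale \<Phi>P[of s] unfolding represents_def by blast
    then show "represents n r x l f \<Gamma> (\<lambda>i u. a * \<Phi> s i u) (a * s)"
      unfolding represents_def by (rule has_sum_cong[rotated]) (auto simp: algebra_simps)
  qed
  have addA: "\<forall>s t. \<Phi> (s + t) = (\<lambda>i u. \<Phi> s i u + \<Phi> t i u)" using add by (intro allI)
  have smulA: "\<forall>a\<in>k. \<forall>s. \<Phi> (a * s) = (\<lambda>i u. a * \<Phi> s i u)" using smul by (intro ballI allI)
  show ?thesis unfolding Let_def
  proof (intro conjI)
    show "is_lifting I \<sigma>" by (rule lift)
    show "\<forall>s. \<exists>!c. c \<in> coeff_families k l \<Gamma> \<and> represents n r x l f \<Gamma> c s" by (rule ex1)
    show "bij_betw (\<lambda>s. THE c. c \<in> coeff_families k l \<Gamma> \<and> represents n r x l f \<Gamma> c s) UNIV (coeff_families k l \<Gamma>)"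
      using bij unfolding \<Phi>_def CF_def .
    show "\<forall>s t. (THE c. c \<in> coeff_families k l \<Gamma> \<and> represents n r x l f \<Gamma> c (s + t)) =
      (\<lambda>i u. (THE c. c \<in> coeff_families k l \<Gamma> \<and> represents n r x l f \<Gamma> c s) i u +
             (THE c. c \<in> coeff_families k l \<Gamma> \<and> represents n r x l f \<Gamma> c t) i u)"
      using addA unfolding \<Phi>_def .
    show "\<forall>a\<in>k. \<forall>s. (THE c. c \<in> coeff_families k l \<Gamma> \<and> represents n r x l f \<Gamma> c (a * s)) =
      (\<lambda>i u. a * (THE c. c \<in> coeff_families k l \<Gamma> \<and> represents n r x l f \<Gamma> c s) i u)"
      using smulA unfolding \<Phi>_def .
  qed
qed

end
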